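(* Let $k\ge3$, $F$ a field, $\Phi\le F^*$ of order $k$ with generator $\varphi$, $(F,\Phi)$ circular. Let $\mathcal{G}=\mathcal{G}_0$ if $k$ is even and $\mathcal{G}=\mathcal{G}_1$ if $k$ is odd. Then every $\mathcal{G}$-orbit in $\mathcal{O}_\varphi(F,k)$ contains a reduced element.
   Context: $\mathbf{k}=\{1,\dots,k-1\}$, $\mathbf{k}_0=\{0,\dots,k-1\}$. $(F,\Phi)$ is circular if $|(\Phi a+b)\cap\Phi c|\le2$ for all $a,b,c\in F^*$, with $\Phi a+b=\{\lambda a+b:\lambda\in\Phi\}$. A quadruple $(i,j\mid s,t)\in\mathbf{k}^4$ with $i\ne s$ is an overlap (w.r.t. $\varphi$) if $\varphi^\omega(\varphi^j-1)(\varphi^s-1)=(\varphi^i-1)(\varphi^t-1)$ for some $\omega\in\mathbf{k}_0$; it is trivial if one of $i\equiv\pm j$, $j\equiv\pm t$, $t\equiv\pm s$, $s\equiv\pm i\pmod k$ holds, nontrivial otherwise; $\mathcal{O}_\varphi(F,k)$ is the set of nontrivial overlaps. For $m=1,\dots,4$, $\kappa_m$ replaces the $m$-th entry $u$ of a quadruple by $k-u$. $D_4$ is the group of coordinate permutations of $(i,j\mid s,t)$ generated by $(i,t)$, $(j,s)$, $(i,j)(s,t)$. $\mathcal{G}_0=\langle\kappa_1,\dots,\kappa_4,D_4\rangle$ and $\mathcal{G}_1=\langle\kappa_1\kappa_4,\kappa_2\kappa_4,\kappa_3\kappa_4,D_4\rangle$. An element $(i,j\mid s,t)$ is reduced if $i<j\le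 s$, $j\le k/2$, and at most one of $i,j,s,t$ exceeds $k/2$. *)

theory Defs
  imports Main
begin

type_synonym quad = "nat \<times> nat \<times> nat \<times> nat"

text \<open>The subgroup generated by phi (finite, so this is the cyclic subgroup).\<close>
definition cyc :: "'a::field \<Rightarrow> 'a set" where
  "cyc \<phi> = range (\<lambda>n::nat. \<phi> ^ n)"

definition circular :: "'a::field set \<Rightarrow> bool" where
  "circular \<Phi> \<longleftrightarrow> (\<forall>a b c. a \<noteq> 0 \<longrightarrow> b \<noteq> 0 \<longrightarrow> c \<noteq> 0 \<longrightarrow>
      card ((\<lambda>l. l * a + b) ` \<Phi> \<inter> (\<lambda>l. l * c) ` \<Phi>) \<le> 2)"

definition idx :: "nat \<Rightarrow> nat set" where
  "idx k = {1..k-1}"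

definition is_overlap :: "'a::field \<Rightarrow> nat \<Rightarrow> quad \<Rightarrow> bool" where
  "is_overlap \<phi> k q = (case q of (i, j, s, t) \<Rightarrow>
      i \<in> idx k \<and> j \<in> idx k \<and> s \<in> idx k \<and> t \<in> idx k \<and> i \<noteq> s \<and>
      (\<exists>\<omega><k. \<phi> ^ \<omega> * (\<phi> ^ j - 1) * (\<phi> ^ s - 1) = (\<phi> ^ i - 1) * (\<phi> ^ t - 1)))"

definition pm_cong :: "nat \<Rightarrow> nat \<Rightarrow> nat \<Rightarrow> bool" where
  "pm_cong k u v \<longleftrightarrow> u mod k = v mod k \<or> (u + v) mod k = 0"

definition trivial_quad :: "nat \<Rightarrow> quad \<Rightarrow> bool" where
  "trivial_quad k q = (case q of (i, j, s, t) \<Rightarrow>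
      pm_cong k i j \<or> pm_cong k j t \<or> pm_cong k t s \<or> pm_cong k s i)"

definition nontriv_overlaps :: "'a::field \<Rightarrow> nat \<Rightarrow> quad set" where
  "nontriv_overlaps \<phi> k = {q. is_overlap \<phi> k q \<and> \<not> trivial_quad k q}"

definition kappa1 :: "nat \<Rightarrow> quad \<Rightarrow> quad" where
  "kappa1 k q = (case q of (i, j, s, t) \<Rightarrow> (k - i, j, s, t))"
definition kappa2 :: "nat \<Rightarrow> quad \<Rightarrow> quad" where
  "kappa2 k q = (case q of (i, j, s, t) \<Rightarrow> (i, k - j, s, t))"
definition kappa3 :: "nat \<Rightarrow> quad \<Rightarrow> quad" where
  "kappa3 k q = (case q of (i, j, s, t) \<Rightarrow> (i, j, k - s, t))"
definition kappa4 :: "nat \<Rightarrow> quad \<Rightarrow> quad" where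
  "kappa4 k q = (case q of (i, j, s, t) \<Rightarrow> (i, j, s, k - t))"

definition sw_it :: "quad \<Rightarrow> quad" where
  "sw_it q = (case q of (i, j, s, t) \<Rightarrow> (t, j, s, i))"
definition sw_js :: "quad \<Rightarrow> quad" where
  "sw_js q = (case q of (i, j, s, t) \<Rightarrow> (i, s, j, t))"
definition sw_ij_st :: "quad \<Rightarrow> quad" where
  "sw_ij_st q = (case q of (i, j, s, t) \<Rightarrow> (j, i, t, s))"

definition gens0 :: "nat \<Rightarrow> (quad \<Rightarrow> quad) set" where
  "gens0 k = {kappa1 k, kappa2 k, kappa3 k, kappa4 k, sw_it, sw_js, sw_ij_st}"

definition gens1 :: "nat \<Rightarrow> (quad \<Rightarrow> quad) set" where
  "gens1 k = {kappa1 k \<circ> kappa4 k, kappa2 k \<circ> kappa4 k, kappa3 k \<circ> kappa4 k,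
              sw_it, sw_js, sw_ij_st}"

text \<open>Orbit of x under the group generated by a set of (involutive) maps:
  closure of {x} under applying generators.\<close>
inductive_set orbit :: "(quad \<Rightarrow> quad) set \<Rightarrow> quad \<Rightarrow> quad set"
  for gs :: "(quad \<Rightarrow> quad) set" and x :: quad where
  base: "x \<in> orbit gs x"
| step: "y \<in> orbit gs x \<Longrightarrow> g \<in> gs \<Longrightarrow> g y \<in> orbit gs x"

definition reduced :: "nat \<Rightarrow> quad \<Rightarrow> bool" where
  "reduced k q = (case q of (i, j, s, t) \<Rightarrow>
      i < j \<and> j \<le> s \<and> 2 * j \<le> k \<and>
      length (filter (\<lambda>u. 2 * u > k) [i, j, s, t]) \<le> 1)"

end

theory Submission
  imports Defs
begin

lemma pm_lin:
  assumes "0<u" "u<k" "0<v" "v<k"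
  shows "pm_cong k u v \<longleftrightarrow> u=v \<or> u+v=k"
proof -
  have "(u+v) mod k = 0 \<longleftrightarrow> u+v=k"
  proof (cases "u+v<k")
    case True then show ?thesis using assms by simp
  next
    case False
    then have "(u+v) mod k = (u+v-k) mod k" using assms
      by (simp add: mod_if)
    also have "\<dots> = u+v-k" using assms by simp
    finally show ?thesis using assms False by auto
  qed
  then show ?thesis using assms unfolding pm_cong_def by simp
qed

lemma orbit_if:
  "y \<in> orbit gs x \<Longrightarrow> g \<in> gs \<Longrightarrow> (if P then g y else y) \<in> orbit gs x"
  by (simp add: orbit.step)

lemma arith8:
  fixes a b c d k :: nat
  assumes "a\<noteq>b" "b\<noteq>d" "d\<noteq>c" "c\<noteq>a"
    "\<not>(2*a>k \<and> 2*b>k)" "\<not>(2*a>k \<and> 2*c>k)" "\<not>(2*a>k \<and> 2*d>k)"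
    "\<not>(2*b>k \<and> 2*c>k)" "\<not>(2*b>k \<and> 2*d>k)" "\<not>(2*c>k \<and> 2*d>k)"
  shows "(a<b \<and> b\<le>c \<and> 2*b\<le>k) \<or> (a<c\<and>c\<le>b\<and>2*c\<le>k) \<or> (d<b\<and>b\<le>c\<and>2*b\<le>k)
    \<or> (d<c\<and>c\<le>b\<and>2*c\<le>k) \<or> (b<a\<and>a\<le>d\<and>2*a\<le>k) \<or> (b<d\<and>d\<le>a\<and>2*d\<le>k)
    \<or> (c<a\<and>a\<le>d\<and>2*a\<le>k) \<or> (c<d\<and>d\<le>a\<and>2*d\<le>k)"
proof -
  consider "a\<le>b" "a\<le>c" "a\<le>d" | "b\<le>a" "b\<le>c" "b\<le>d" | "c\<le>a" "c\<le>b" "c\<le>d" | "d\<le>a" "d\<le>b" "d\<le>c"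
    by linarith
  then show ?thesis
  proof cases
    case 1 show ?thesis
    proof (cases "b \<le> c")
      case True with 1 assms have "a<b \<and> b\<le>c \<and> 2*b\<le>k" by auto
      then show ?thesis by blast
    next
      case False with 1 assms have "a<c\<and>c\<le>b\<and>2*c\<le>k" by auto
      then show ?thesis by blast
    qed
  next
    case 2 show ?thesis
    proof (cases "a \<le> d")
      case True with 2 assms have "b<a\<and>a\<le>d\<and>2*a\<le>k" by auto
      then show ?thesis by blast
    next
      case False with 2 assms have "b<d\<and>d\<le>a\<and>2*d\<le>k" by auto
      then show ?thesis by blast
    qed
  next
    case 3 show ?thesis
    proof (cases "a \<le> d")
      case True with 3 assms have "c<a\<and>a\<le>d\<and>2*a\<le>k" by auto
      then show ?thesis by blast
    next
      case False with 3 assms have "c<d\<and>d\<le>a\<and>2*d\<le>k" by auto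
      then show ?thesis by blast
    qed
  next
    case 4 show ?thesis
    proof (cases "b \<le> c")
      case True with 4 assms have "d<b\<and>b\<le>c\<and>2*b\<le>k" by auto
      then show ?thesis by blast
    next
      case False with 4 assms have "d<c\<and>c\<le>b\<and>2*c\<le>k" by auto
      then show ?thesis by blast
    qed
  qed
qed

lemma red_intro:
  fixes p q r w k :: nat
  assumes "p<q" "q\<le>r" "2*q\<le>k"
    "\<not>(2*p>k \<and> 2*q>k)" "\<not>(2*p>k \<and> 2*r>k)" "\<not>(2*p>k \<and> 2*w>k)"
    "\<not>(2*q>k \<and> 2*r>k)" "\<not>(2*q>k \<and> 2*w>k)" "\<not>(2*r>k \<and> 2*w>k)"
  shows "reduced k (p,q,r,w)"
  using assms by (auto simp add: reduced_def)

lemma d4: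
  fixes a b c d k :: nat
  assumes g: "sw_it \<in> gs" "sw_js \<in> gs" "sw_ij_st \<in> gs" and m1: "(a,b,c,d) \<in> orbit gs x"
  and h: "a\<noteq>b" "b\<noteq>d" "d\<noteq>c" "c\<noteq>a"
    "\<not>(2*a>k \<and> 2*b>k)" "\<not>(2*a>k \<and> 2*c>k)" "\<not>(2*a>k \<and> 2*d>k)"
    "\<not>(2*b>k \<and> 2*c>k)" "\<not>(2*b>k \<and> 2*d>k)" "\<not>(2*c>k \<and> 2*d>k)"
  shows "\<exists>y\<in>orbit gs x. reduced k y"
proof -
  have m2: "(a,c,b,d) \<in> orbit gs x" using orbit.step[OF m1 g(2)] by (simp add: sw_js_def)
  have m3: "(d,b,c,a) \<in> orbit gs x" using orbit.step[OF m1 g(1)] by (simp add: sw_it_def)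
  have m4: "(d,c,b,a) \<in> orbit gs x" using orbit.step[OF m3 g(2)] by (simp add: sw_js_def)
  have m5: "(b,a,d,c) \<in> orbit gs x" using orbit.step[OF m1 g(3)] by (simp add: sw_ij_st_def)
  have m6: "(b,d,a,c) \<in> orbit gs x" using orbit.step[OF m5 g(2)] by (simp add: sw_js_def)
  have m7: "(c,a,d,b) \<in> orbit gs x" using orbit.step[OF m5 g(1)] by (simp add: sw_it_def)
  have m8: "(c,d,a,b) \<in> orbit gs x" using orbit.step[OF m7 g(2)] by (simp add: sw_js_def)
  from arith8[OF h] show ?thesis
  proof (elim disjE)
    assume "a<b \<and> b\<le>c \<and> 2*b\<le>k" then have "reduced k (a,b,c,d)"
      by (intro red_intro) (use h in auto)
    with m1 show ?thesis by blast
  next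
    assume "a<c \<and> c\<le>b \<and> 2*c\<le>k" then have "reduced k (a,c,b,d)"
      by (intro red_intro) (use h in auto)
    with m2 show ?thesis by blast
  next
    assume "d<b \<and> b\<le>c \<and> 2*b\<le>k" then have "reduced k (d,b,c,a)"
      by (intro red_intro) (use h in auto)
    with m3 show ?thesis by blast
  next
    assume "d<c \<and> c\<le>b \<and> 2*c\<le>k" then have "reduced k (d,c,b,a)"
      by (intro red_intro) (use h in auto)
    with m4 show ?thesis by blast
  next
    assume "b<a \<and> a\<le>d \<and> 2*a\<le>k" then have "reduced k (b,a,d,c)"
      by (intro red_intro) (use h in auto)
    with m5 show ?thesis by blast
  next
    assume "b<d \<and> d\<le>a \<and> 2*d\<le>k" then have "reduced k (b,d,a,c)"
      by (intro red_intro) (use h in auto)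
    with m6 show ?thesis by blast
  next
    assume "c<a \<and> a\<le>d \<and> 2*a\<le>k" then have "reduced k (c,a,d,b)"
      by (intro red_intro) (use h in auto)
    with m7 show ?thesis by blast
  next
    assume "c<d \<and> d\<le>a \<and> 2*d\<le>k" then have "reduced k (c,d,a,b)"
      by (intro red_intro) (use h in auto)
    with m8 show ?thesis by blast
  qed
qed

lemma Fne:
  fixes u v k :: nat
  assumes "0<u" "u<k" "0<v" "v<k" "u\<noteq>v" "u+v\<noteq>k"
  shows "(if 2*u>k then k-u else u) \<noteq> (if 2*v>k then k-v else v)"
  using assms by (cases "2*u>k"; cases "2*v>k") auto

lemma Fne2:
  fixes u v w k :: nat
  assumes "0<u" "u<k" "0<v" "v<k" "u\<noteq>v" "u+v\<noteq>k" "w = v \<or> w = k - v"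
  shows "(if 2*u>k then k-u else u) \<noteq> w"
  using assms by (cases "2*u>k"; cases "w = v") auto

theorem lemma17:
  fixes \<phi> :: "'a::field" and k :: nat
  assumes "k \<ge> 3"
    and "\<phi> \<noteq> 0"
    and "card (cyc \<phi>) = k"
    and "circular (cyc \<phi>)"
  shows "\<forall>x \<in> nontriv_overlaps \<phi> k.
           \<exists>y \<in> orbit (if even k then gens0 k else gens1 k) x. reduced k y"
proof
  fix x assume xin: "x \<in> nontriv_overlaps \<phi> k"
  obtain i j s t where x: "x = (i,j,s,t)" by (cases x)
  from xin x have ov: "is_overlap \<phi> k (i,j,s,t)" and nt: "\<not> trivial_quad k (i,j,s,t)"
    by (auto simp: nontriv_overlaps_def)
  from ov have r: "0<i" "i<k" "0<j" "j<k" "0<s" "s<k" "0<t" "t<k"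
    by (auto simp: is_overlap_def idx_def)
  from nt r have n: "i\<noteq>j" "i+j\<noteq>k" "j\<noteq>t" "j+t\<noteq>k" "t\<noteq>s" "t+s\<noteq>k" "s\<noteq>i" "s+i\<noteq>k"
    by (auto simp: trivial_quad_def pm_lin)
  define F where "F u = (if 2*u>k then k-u else u)" for u :: nat
  have Fs: "\<And>u. u<k \<Longrightarrow> \<not> 2 * F u > k" unfolding F_def by (simp split: if_split) arith
  let ?gs = "if even k then gens0 k else gens1 k"
  have b: "(i,j,s,t) \<in> orbit ?gs x" using x orbit.base by simp
  show "\<exists>y \<in> orbit ?gs x. reduced k y"
  proof (cases "even k")
    case True
    then have gs: "?gs = gens0 k" by simp
    have g: "kappa1 k \<in> gens0 k" "kappa2 k \<in> gens0 k" "kappa3 k \<in> gens0 k" "kappa4 k \<in> gens0 k"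
      "sw_it \<in> gens0 k" "sw_js \<in> gens0 k" "sw_ij_st \<in> gens0 k" by (simp_all add: gens0_def)
    have b0: "(i,j,s,t) \<in> orbit (gens0 k) x" using b gs by simp
    have "(if 2*i>k then kappa1 k (i,j,s,t) else (i,j,s,t)) = (F i, j, s, t)"
      by (simp add: kappa1_def F_def)
    with orbit_if[OF b0 g(1)] have b1: "(F i, j, s, t) \<in> orbit (gens0 k) x" by metis
    have "(if 2*j>k then kappa2 k (F i,j,s,t) else (F i,j,s,t)) = (F i, F j, s, t)"
      by (simp add: kappa2_def F_def)
    with orbit_if[OF b1 g(2)] have b2: "(F i, F j, s, t) \<in> orbit (gens0 k) x" by metis
    have "(if 2*s>k then kappa3 k (F i,F j,s,t) else (F i,F j,s,t)) = (F i, F j, F s, t)"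
      by (simp add: kappa3_def F_def)
    with orbit_if[OF b2 g(3)] have b3: "(F i, F j, F s, t) \<in> orbit (gens0 k) x" by metis
    have "(if 2*t>k then kappa4 k (F i,F j,F s,t) else (F i,F j,F s,t)) = (F i, F j, F s, F t)"
      by (simp add: kappa4_def F_def)
    with orbit_if[OF b3 g(4)] have b4: "(F i, F j, F s, F t) \<in> orbit (gens0 k) x" by metis
    have ne1: "F i \<noteq> F j" unfolding F_def by (rule Fne) (use r n in auto)
    have ne2: "F j \<noteq> F t" unfolding F_def by (rule Fne) (use r n in auto)
    have ne3: "F t \<noteq> F s" unfolding F_def by (rule Fne) (use r n in auto)
    have ne4: "F s \<noteq> F i" unfolding F_def by (rule Fne) (use r n in auto)
    note ne = ne1 ne2 ne3 ne4
    have sm: "\<not> 2 * F i > k" "\<not> 2 * F j > k" "\<not> 2 * F s > k" "\<not> 2 * F t > k"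
      using r Fs by auto
    have "\<exists>y\<in>orbit (gens0 k) x. reduced k y"
      by (rule d4[OF g(5,6,7) b4 ne]) (use sm in auto)
    then show ?thesis using gs by simp
  next
    case False
    then have gs: "?gs = gens1 k" by simp
    have g: "kappa1 k \<circ> kappa4 k \<in> gens1 k" "kappa2 k \<circ> kappa4 k \<in> gens1 k"
      "kappa3 k \<circ> kappa4 k \<in> gens1 k"
      "sw_it \<in> gens1 k" "sw_js \<in> gens1 k" "sw_ij_st \<in> gens1 k" by (simp_all add: gens1_def)
    have b0: "(i,j,s,t) \<in> orbit (gens1 k) x" using b gs by simp
    define T1 where "T1 = (if 2*i>k then k-t else t)"
    define T2 where "T2 = (if 2*j>k then k-T1 else T1)"
    define T3 where "T3 = (if 2*s>k then k-T2 else T2)"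
    have T1r: "0<T1" "T1<k" "T1 = t \<or> T1 = k-t" using r by (auto simp: T1_def)
    have T2r: "0<T2" "T2<k" "T2 = t \<or> T2 = k-t" using T1r r by (auto simp: T2_def)
    have T3r: "0<T3" "T3<k" "T3 = t \<or> T3 = k-t" using T2r r by (auto simp: T3_def)
    have "(if 2*i>k then (kappa1 k \<circ> kappa4 k) (i,j,s,t) else (i,j,s,t)) = (F i, j, s, T1)"
      by (simp add: kappa1_def kappa4_def F_def T1_def)
    with orbit_if[OF b0 g(1)] have b1: "(F i, j, s, T1) \<in> orbit (gens1 k) x" by metis
    have "(if 2*j>k then (kappa2 k \<circ> kappa4 k) (F i,j,s,T1) else (F i,j,s,T1)) = (F i, F j, s, T2)"
      by (simp add: kappa2_def kappa4_def F_def T2_def)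
    with orbit_if[OF b1 g(2)] have b2: "(F i, F j, s, T2) \<in> orbit (gens1 k) x" by metis
    have "(if 2*s>k then (kappa3 k \<circ> kappa4 k) (F i,F j,s,T2) else (F i,F j,s,T2)) = (F i, F j, F s, T3)"
      by (simp add: kappa3_def kappa4_def F_def T3_def)
    with orbit_if[OF b2 g(3)] have b3: "(F i, F j, F s, T3) \<in> orbit (gens1 k) x" by metis
    have ne1: "F i \<noteq> F j" unfolding F_def by (rule Fne) (use r n in auto)
    have ne2: "F j \<noteq> T3" unfolding F_def by (rule Fne2) (use r n T3r(3) in auto)
    have ne3': "F s \<noteq> T3" unfolding F_def by (rule Fne2) (use r n T3r(3) in auto)
    have ne4: "F s \<noteq> F i" unfolding F_def by (rule Fne) (use r n in auto)
    note ne = ne1 ne2 ne3'[symmetric] ne4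
    have sm: "\<not> 2 * F i > k" "\<not> 2 * F j > k" "\<not> 2 * F s > k"
      using r Fs by auto
    have "\<exists>y\<in>orbit (gens1 k) x. reduced k y"
      by (rule d4[OF g(4,5,6) b3 ne]) (use sm in auto)
    then show ?thesis using gs by simp
  qed
qed

end
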